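(* Fix integers $2\le k\le n'\le n$. The $n'$-grouped $(k,n)$ random-grid visual cryptography scheme described in the context is valid, i.e.: (i) for every set of $k$ of the $n$ shadow images, the recovered image obtained by stacking them has contrast $\alpha>0$; and (ii) for every $q<k$ and every set of $q$ shadow images, the recovered image obtained by stacking them has contrast $\alpha=0$.
   Context: Let $M=\lceil n/n'\rceil$, $r=n-(M-1)n'$. Each secret pixel $s\in\{0,1\}$ is shared independently as follows. Basic bits: $b_1,\ldots,b_{k-1}$ are independent uniform bits and $b_k=s\oplus b_1\oplus\cdots\oplus b_{k-1}$. There is a fixed sequence $c=(c_1,\ldots,c_{n'})\in\{1,\ldots,k\}^{n'}$ in which every value $1,\ldots,k$ occurs (the index pattern of the base $(k,n')$ scheme). The $n$ share bits form $M$ groups: groups $1,\ldots,M-1$ have $n'$ positions and group $M$ has $r$ positions. For each group $j$ an independent uniformly random permutation $\sigma_j$ of $\{1,\ldots,n'\}$ is drawn (independent of the $b_i$), and position $\delta$ of group $j$ receives the bit $b_{c_{\sigma_j(\delta)}}$ ($\delta\le r$ for group $M$); this bit is the pixel of shadow image number $(j-1)n'+\delta$. Stacking shadow images computes the OR of their bits at each pixel (0 = transparent, 1 = opaque). For a stacked set of shadow images, let $t_s$ be the probability that a recovered pixel equals $0$ given the secret pixel is $s$; the contrast is $\alpha=(t_0-t_1)/(1+t_1)$. *)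

theory Defs
  imports "HOL-Combinatorics.Permutations" "HOL-Library.FuncSet" Complex_Main
begin

text \<open>Bits are booleans: True = 1 (opaque), False = 0 (transparent).
  Shadow images are numbered 1..n, basic bits 1..k, positions 1..n'.\<close>

definition num_groups :: "nat \<Rightarrow> nat \<Rightarrow> nat" where
  "num_groups n n' = (n + n' - 1) div n'"   \<comment> \<open>M = ceiling (n / n')\<close>

text \<open>Sample space: the free basic bits b_1..b_{k-1} and the permutations
  sigma_1..sigma_M of {1..n'}; all outcomes equally likely (uniform, independent).\<close>
definition sample_space :: "nat \<Rightarrow> nat \<Rightarrow> nat \<Rightarrow>
    ((nat \<Rightarrow> bool) \<times> (nat \<Rightarrow> nat \<Rightarrow> nat)) set" where
  "sample_space n n' k =
     (PiE {1..k-1} (\<lambda>_. UNIV)) \<times>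
     (PiE {1..num_groups n n'} (\<lambda>_. {\<sigma>. \<sigma> permutes {1..n'}}))"

text \<open>Basic bit i: b_i for i < k, and b_k = s xor b_1 xor ... xor b_{k-1}.\<close>
definition basic_bit :: "nat \<Rightarrow> bool \<Rightarrow> (nat \<Rightarrow> bool) \<Rightarrow> nat \<Rightarrow> bool" where
  "basic_bit k s b i =
     (if i < k then b i else (s \<noteq> odd (card {j \<in> {1..k-1}. b j})))"

text \<open>Pixel of shadow image number m = (j-1) n' + \<delta> (1 \<le> \<delta> \<le> n'):
  the bit b_{c(sigma_j(delta))}.\<close>
definition share_bit :: "nat \<Rightarrow> nat \<Rightarrow> (nat \<Rightarrow> nat) \<Rightarrow> bool \<Rightarrow>
    ((nat \<Rightarrow> bool) \<times> (nat \<Rightarrow> nat \<Rightarrow> nat)) \<Rightarrow> nat \<Rightarrow> bool" where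
  "share_bit n' k c s \<omega> m =
     (let j = (m - 1) div n' + 1; \<delta> = (m - 1) mod n' + 1
      in basic_bit k s (fst \<omega>) (c (snd \<omega> j \<delta>)))"

definition stacked :: "nat \<Rightarrow> nat \<Rightarrow> (nat \<Rightarrow> nat) \<Rightarrow> nat set \<Rightarrow> bool \<Rightarrow>
    ((nat \<Rightarrow> bool) \<times> (nat \<Rightarrow> nat \<Rightarrow> nat)) \<Rightarrow> bool" where
  "stacked n' k c S s \<omega> = (\<exists>m\<in>S. share_bit n' k c s \<omega> m)"

definition t_prob :: "nat \<Rightarrow> nat \<Rightarrow> nat \<Rightarrow> (nat \<Rightarrow> nat) \<Rightarrow> nat set \<Rightarrow> bool \<Rightarrow> real" where
  "t_prob n n' k c S s =
     real (card {\<omega> \<in> sample_space n n' k. \<not> stacked n' k c S s \<omega>})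
     / real (card (sample_space n n' k))"

definition contrast :: "nat \<Rightarrow> nat \<Rightarrow> nat \<Rightarrow> (nat \<Rightarrow> nat) \<Rightarrow> nat set \<Rightarrow> real" where
  "contrast n n' k c S =
     (t_prob n n' k c S False - t_prob n n' k c S True) / (1 + t_prob n n' k c S True)"

end

theory Submission
  imports Defs
begin

lemma perm_extend:
  assumes "finite A" "D \<subseteq> A" "inj_on f D" "f ` D \<subseteq> A"
  shows "\<exists>\<sigma>. \<sigma> permutes A \<and> (\<forall>x\<in>D. \<sigma> x = f x)"
proof -
  have "card (A - D) = card (A - f ` D)"
    using assms by (simp add: card_Diff_subset card_image finite_subset)
  then obtain h where h: "bij_betw h (A - D) (A - f ` D)"
    using finite_same_card_bij assms by (meson finite_Diff)
  have f: "bij_betw f D (f ` D)" using assms(3) by (simp add: bij_betw_imageI)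
  have "bij_betw (\<lambda>x. if x \<in> D then f x else h x) (D \<union> (A - D)) (f ` D \<union> (A - f ` D))"
    by (rule bij_betw_disjoint_Un[OF f h]) auto
  moreover have "D \<union> (A - D) = A" "f ` D \<union> (A - f ` D) = A" using assms by auto
  ultimately have b: "bij_betw (\<lambda>x. if x \<in> D then f x else h x) A A" by simp
  define \<sigma> where "\<sigma> = (\<lambda>x. if x \<in> A then (if x \<in> D then f x else h x) else x)"
  have "bij_betw \<sigma> A A" using b unfolding \<sigma>_def by (rule bij_betw_cong[THEN iffD1, rotated]) auto
  then have "\<sigma> permutes A" by (rule bij_imp_permutes) (simp add: \<sigma>_def)
  moreover have "\<forall>x\<in>D. \<sigma> x = f x" using assms(2) by (auto simp: \<sigma>_def)
  ultimately show ?thesis by blast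
qed

lemma parity_flip:
  fixes k i0 :: nat
  assumes "i0 \<in> {1..k-1}"
  shows "odd (card {j\<in>{1..k-1}. (b(i0 := \<not> b i0)) j}) = (\<not> odd (card {j\<in>{1..k-1}. b j}))"
proof (cases "b i0")
  case True
  have "{j\<in>{1..k-1}. (b(i0 := \<not> b i0)) j} = {j\<in>{1..k-1}. b j} - {i0}" using True by auto
  moreover have "i0 \<in> {j\<in>{1..k-1}. b j}" using True assms by auto
  moreover have "finite {j\<in>{1..k-1}. b j}" by (rule finite_subset[where B="{1..k-1}"]) auto
  ultimately show ?thesis
    by (metis (no_types, lifting) card_Diff1_less card_Diff_singleton card_gt_0_iff diff_Suc_1 empty_iff even_Suc less_numeral_extra(3) not0_implies_Suc)
next
  case False
  have "{j\<in>{1..k-1}. (b(i0 := \<not> b i0)) j} = insert i0 {j\<in>{1..k-1}. b j}" using False assms by auto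
  moreover have "i0 \<notin> {j\<in>{1..k-1}. b j}" using False by auto
  ultimately show ?thesis by simp
qed

lemma bb_flip:
  assumes "i0 \<in> {1..k-1}" "i \<noteq> i0"
  shows "basic_bit k (\<not>s) (b(i0 := \<not> b i0)) i = basic_bit k s b i"
  using parity_flip[OF assms(1), of b] assms by (auto simp: basic_bit_def)

lemma F_flip:
  assumes "i0 \<in> {1..k-1}" "i0 \<notin> I"
  shows "card {b\<in>PiE {1..k-1} (\<lambda>_. UNIV). \<forall>i\<in>I. \<not> basic_bit k s b i}
       = card {b\<in>PiE {1..k-1} (\<lambda>_. UNIV). \<forall>i\<in>I. \<not> basic_bit k (\<not>s) b i}"
proof (rule bij_betw_same_card)
  let ?\<phi> = "\<lambda>b. b(i0 := \<not> b i0)"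
  show "bij_betw ?\<phi> {b\<in>PiE {1..k-1} (\<lambda>_. UNIV). \<forall>i\<in>I. \<not> basic_bit k s b i}
       {b\<in>PiE {1..k-1} (\<lambda>_. UNIV). \<forall>i\<in>I. \<not> basic_bit k (\<not>s) b i}"
  proof (rule bij_betw_byWitness[where f'="?\<phi>"])
    show "\<forall>a\<in>{b \<in> {1..k - 1} \<rightarrow>\<^sub>E UNIV. \<forall>i\<in>I. \<not> basic_bit k s b i}. ?\<phi> (?\<phi> a) = a" by auto
    show "\<forall>a\<in>{b \<in> {1..k - 1} \<rightarrow>\<^sub>E UNIV. \<forall>i\<in>I. \<not> basic_bit k (\<not>s) b i}. ?\<phi> (?\<phi> a) = a" by auto
    show "?\<phi> ` {b \<in> {1..k - 1} \<rightarrow>\<^sub>E UNIV. \<forall>i\<in>I. \<not> basic_bit k s b i}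
      \<subseteq> {b \<in> {1..k - 1} \<rightarrow>\<^sub>E UNIV. \<forall>i\<in>I. \<not> basic_bit k (\<not> s) b i}"
    proof (rule image_subsetI)
      fix b assume b: "b \<in> {b \<in> {1..k - 1} \<rightarrow>\<^sub>E UNIV. \<forall>i\<in>I. \<not> basic_bit k s b i}"
      have "?\<phi> b \<in> {1..k - 1} \<rightarrow>\<^sub>E UNIV" using b assms(1) by (simp add: PiE_iff extensional_def)
      moreover have "\<forall>i\<in>I. \<not> basic_bit k (\<not> s) (?\<phi> b) i"
      proof
        fix i assume "i \<in> I"
        then have "i \<noteq> i0" using assms(2) by blast
        then show "\<not> basic_bit k (\<not> s) (?\<phi> b) i" using bb_flip[OF assms(1), of i s b] b \<open>i \<in> I\<close> by simp
      qed
      ultimately show "?\<phi> b \<in> {b \<in> {1..k - 1} \<rightarrow>\<^sub>E UNIV. \<forall>i\<in>I. \<not> basic_bit k (\<not> s) b i}" by blast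
    qed
    show "?\<phi> ` {b \<in> {1..k - 1} \<rightarrow>\<^sub>E UNIV. \<forall>i\<in>I. \<not> basic_bit k (\<not>s) b i}
      \<subseteq> {b \<in> {1..k - 1} \<rightarrow>\<^sub>E UNIV. \<forall>i\<in>I. \<not> basic_bit k s b i}"
    proof (rule image_subsetI)
      fix b assume b: "b \<in> {b \<in> {1..k - 1} \<rightarrow>\<^sub>E UNIV. \<forall>i\<in>I. \<not> basic_bit k (\<not>s) b i}"
      have "?\<phi> b \<in> {1..k - 1} \<rightarrow>\<^sub>E UNIV" using b assms(1) by (simp add: PiE_iff extensional_def)
      moreover have "\<forall>i\<in>I. \<not> basic_bit k s (?\<phi> b) i"
      proof
        fix i assume "i \<in> I"
        then have "i \<noteq> i0" using assms(2) by blast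
        then show "\<not> basic_bit k s (?\<phi> b) i" using bb_flip[OF assms(1), of i "\<not>s" b] b \<open>i \<in> I\<close> by simp
      qed
      ultimately show "?\<phi> b \<in> {b \<in> {1..k - 1} \<rightarrow>\<^sub>E UNIV. \<forall>i\<in>I. \<not> basic_bit k s b i}" by blast
    qed
  qed
qed

lemma F_low:
  assumes "\<forall>i\<in>I. i < k"
  shows "{b\<in>PiE {1..k-1} (\<lambda>_. UNIV). \<forall>i\<in>I. \<not> basic_bit k s b i}
       = {b\<in>PiE {1..k-1} (\<lambda>_. UNIV). \<forall>i\<in>I. \<not> basic_bit k t b i}"
  using assms by (auto simp: basic_bit_def)

lemma F_full_T:
  assumes "I = {1..k}" "k \<ge> 1"
  shows "card {b\<in>PiE {1..k-1} (\<lambda>_. UNIV). \<forall>i\<in>I. \<not> basic_bit k True b i} = 0"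
proof -
  have False if b: "b \<in> PiE {1..k-1} (\<lambda>_. UNIV)" "\<forall>i\<in>I. \<not> basic_bit k True b i" for b
  proof -
    have nb: "\<not> b j" if j: "j \<in> {1..k-1}" for j
    proof -
      have "j \<in> I" "j < k" using assms j by auto
      then have "\<not> basic_bit k True b j" using b(2) by blast
      then show "\<not> b j" using \<open>j < k\<close> unfolding basic_bit_def by simp
    qed
    have "{j \<in> {1..k-1}. b j} = {}" using nb by blast
    then have e: "card {j \<in> {1..k-1}. b j} = 0" by (metis card.empty)
    have "basic_bit k True b k" unfolding basic_bit_def e by simp
    moreover have "k \<in> I" using assms by auto
    ultimately show False using b(2) by blast
  qed
  then have "{b\<in>PiE {1..k-1} (\<lambda>_. UNIV). \<forall>i\<in>I. \<not> basic_bit k True b i} = {}" by blast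
  then show ?thesis by (metis card.empty)
qed

lemma F_full_F:
  assumes "I = {1..k}" "k \<ge> 1"
  shows "card {b\<in>PiE {1..k-1} (\<lambda>_. UNIV). \<forall>i\<in>I. \<not> basic_bit k False b i} \<ge> 1"
proof -
  define b0 where "b0 = (\<lambda>i::nat. if i \<in> {1..k-1} then False else undefined)"
  have "{j \<in> {1..k-1}. b0 j} = {}" unfolding b0_def by auto
  then have e: "card {j \<in> {1..k-1}. b0 j} = 0" by (metis card.empty)
  have nb: "\<not> basic_bit k False b0 i" if "i \<in> I" for i
  proof (cases "i < k")
    case True
    then have "i \<in> {1..k-1}" using that assms by auto
    then show ?thesis using True unfolding basic_bit_def b0_def by simp
  next
    case False
    then show ?thesis unfolding basic_bit_def e by simp
  qed
  have "b0 \<in> PiE {1..k-1} (\<lambda>_. UNIV)" unfolding b0_def by (simp add: PiE_iff extensional_def)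
  with nb have "b0 \<in> {b\<in>PiE {1..k-1} (\<lambda>_. UNIV). \<forall>i\<in>I. \<not> basic_bit k False b i}" by blast
  then have "{b0} \<subseteq> {b\<in>PiE {1..k-1} (\<lambda>_. UNIV). \<forall>i\<in>I. \<not> basic_bit k False b i}" by blast
  moreover have "finite {b\<in>PiE {1..k-1} (\<lambda>_. UNIV::bool set). \<forall>i\<in>I. \<not> basic_bit k False b i}"
    by (simp add: finite_PiE)
  ultimately have "card {b0} \<le> card {b\<in>PiE {1..k-1} (\<lambda>_. UNIV). \<forall>i\<in>I. \<not> basic_bit k False b i}"
    by (rule card_mono[rotated])
  then show ?thesis by simp
qed

lemma card_split:
  assumes "finite B" "finite P"
  shows "card {\<omega> \<in> B \<times> P. Q \<omega>} = (\<Sum>p\<in>P. card {b\<in>B. Q (b,p)})"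
proof -
  have "{\<omega> \<in> B \<times> P. Q \<omega>} = (\<Union>p\<in>P. {b\<in>B. Q (b,p)} \<times> {p})" by auto
  moreover have "card (\<Union>p\<in>P. {b\<in>B. Q (b,p)} \<times> {p}) = (\<Sum>p\<in>P. card ({b\<in>B. Q (b,p)} \<times> {p}))"
    by (rule card_UN_disjoint) (use assms in auto)
  ultimately show ?thesis by (simp add: card_cartesian_product)
qed

lemma jj_bound:
  fixes m n n' :: nat
  assumes "1 \<le> m" "m \<le> n" "1 \<le> n'"
  shows "(m - 1) div n' + 1 \<in> {1..num_groups n n'}"
proof -
  have le: "(m - 1) div n' \<le> (n - 1) div n'" using assms by (simp add: div_le_mono)
  have "n + n' - 1 = (n - 1) + n'" using assms by simp
  then have "(n + n' - 1) div n' = ((n - 1) + n') div n'" by simp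
  also have "\<dots> = (n - 1) div n' + 1" using assms div_add_self2[of n' "n - 1"] by simp
  finally have eq: "(n + n' - 1) div n' = (n - 1) div n' + 1" .
  show ?thesis using le eq by (simp add: num_groups_def)
qed

lemma group_perm:
  fixes n' j :: nat and S :: "nat set"
  assumes g: "bij_betw g S {1..k}" and e: "\<forall>i\<in>{1..k}. e i \<in> {1..n'} \<and> c (e i) = (i::nat)"
  shows "\<exists>\<sigma>. \<sigma> permutes {1..n'} \<and> (\<forall>\<delta>\<in>{\<delta>\<in>{1..n'}. (j - 1) * n' + \<delta> \<in> S}. \<sigma> \<delta> = e (g ((j - 1) * n' + \<delta>)))"
proof (rule perm_extend)
  let ?D = "{\<delta>\<in>{1..n'}. (j - 1) * n' + \<delta> \<in> S}"
  show "finite {1..n'}" by simp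
  show "?D \<subseteq> {1..n'}" by (rule Collect_restrict)
  have ge: "g x \<in> {1..k}" if "x \<in> S" for x by (rule bij_betw_apply[OF g that])
  show "(\<lambda>\<delta>. e (g ((j - 1) * n' + \<delta>))) ` ?D \<subseteq> {1..n'}"
  proof (rule image_subsetI)
    fix \<delta> assume "\<delta> \<in> ?D"
    then have "g ((j - 1) * n' + \<delta>) \<in> {1..k}" using ge by blast
    then show "e (g ((j - 1) * n' + \<delta>)) \<in> {1..n'}" using e by blast
  qed
  show "inj_on (\<lambda>\<delta>. e (g ((j - 1) * n' + \<delta>))) ?D"
  proof (rule inj_onI)
    fix x y assume x: "x \<in> ?D" and y: "y \<in> ?D"
      and eq: "e (g ((j - 1) * n' + x)) = e (g ((j - 1) * n' + y))"
    have "c (e (g ((j - 1) * n' + x))) = c (e (g ((j - 1) * n' + y)))" using eq by simp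
    moreover have "c (e (g ((j - 1) * n' + x))) = g ((j - 1) * n' + x)" using e ge x by blast
    moreover have "c (e (g ((j - 1) * n' + y))) = g ((j - 1) * n' + y)" using e ge y by blast
    ultimately have "g ((j - 1) * n' + x) = g ((j - 1) * n' + y)" by simp
    then have "(j - 1) * n' + x = (j - 1) * n' + y" using g x y unfolding bij_betw_def inj_on_def by blast
    then show "x = y" by simp
  qed
qed

lemma exists_full:
  fixes n n' k :: nat and c :: "nat \<Rightarrow> nat"
  assumes n'1: "1 \<le> n'" and S: "S \<subseteq> {1..n}" and g: "bij_betw g S {1..k}"
    and e: "\<forall>i\<in>{1..k}. e i \<in> {1..n'} \<and> c (e i) = i"
  shows "\<exists>p \<in> PiE {1..num_groups n n'} (\<lambda>_. {\<sigma>. \<sigma> permutes {1..n'}}).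
           \<forall>m\<in>S. c (p ((m - 1) div n' + 1) ((m - 1) mod n' + 1)) = g m"
proof -
  have "\<forall>j. \<exists>\<sigma>. \<sigma> permutes {1..n'} \<and> (\<forall>\<delta>\<in>{\<delta>\<in>{1..n'}. (j - 1) * n' + \<delta> \<in> S}. \<sigma> \<delta> = e (g ((j - 1) * n' + \<delta>)))"
    using group_perm[OF g e] by (intro allI)
  from choice[OF this] obtain \<sigma> where \<sigma>0: "\<forall>j. \<sigma> j permutes {1..n'} \<and> (\<forall>\<delta>\<in>{\<delta>\<in>{1..n'}. (j - 1) * n' + \<delta> \<in> S}. \<sigma> j \<delta> = e (g ((j - 1) * n' + \<delta>)))"
    by (elim exE)
  define p0 where "p0 = (\<lambda>j. if j \<in> {1..num_groups n n'} then \<sigma> j else undefined)"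
  have p0P: "p0 \<in> PiE {1..num_groups n n'} (\<lambda>_. {\<sigma>. \<sigma> permutes {1..n'}})"
    unfolding PiE_iff extensional_def p0_def using \<sigma>0 by simp
  have "c (p0 ((m - 1) div n' + 1) ((m - 1) mod n' + 1)) = g m" if m: "m \<in> S" for m
  proof -
    define j where "j = (m - 1) div n' + 1"
    define d where "d = (m - 1) mod n' + 1"
    have m1: "1 \<le> m" "m \<le> n" using m S by auto
    have jM: "j \<in> {1..num_groups n n'}" unfolding j_def by (rule jj_bound[OF m1 n'1])
    have mm: "(j - 1) * n' + d = m" unfolding j_def d_def using m1 by simp
    have dD: "d \<in> {\<delta>\<in>{1..n'}. (j - 1) * n' + \<delta> \<in> S}" using mm m n'1 unfolding d_def by (simp add: Suc_leI)
    have "p0 j = \<sigma> j" using jM unfolding p0_def by simp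
    moreover have "\<sigma> j d = e (g ((j - 1) * n' + d))" using \<sigma>0 dD by simp
    ultimately have "p0 j d = e (g m)" using mm by simp
    moreover have "g m \<in> {1..k}" by (rule bij_betw_apply[OF g m])
    ultimately have "c (p0 j d) = g m" using e by simp
    then show ?thesis unfolding j_def d_def .
  qed
  with p0P show ?thesis by blast
qed
lemma dd_bound:
  fixes m n' :: nat
  assumes "1 \<le> n'"
  shows "(m - 1) mod n' + 1 \<in> {1..n'}"
  using assms by (simp add: Suc_leI)

lemma mm_jj_dd:
  fixes m n' :: nat
  assumes "1 \<le> m"
  shows "((m - 1) div n' + 1 - 1) * n' + ((m - 1) mod n' + 1) = m"
  using assms by simp

theorem theorem2:
  fixes n n' k :: nat and c :: "nat \<Rightarrow> nat"
  assumes "2 \<le> k" and "k \<le> n'" and "n' \<le> n"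
    and "c ` {1..n'} = {1..k}"
  shows "(\<forall>S. S \<subseteq> {1..n} \<and> card S = k \<longrightarrow> contrast n n' k c S > 0) \<and>
         (\<forall>q<k. \<forall>S. S \<subseteq> {1..n} \<and> card S = q \<longrightarrow> contrast n n' k c S = 0)"
proof -
  have n'1: "1 \<le> n'" using assms by simp
  define M where "M = num_groups n n'"
  define B where "B = PiE {1..k-1} (\<lambda>_. UNIV::bool set)"
  define P where "P = PiE {1..M} (\<lambda>_. {\<sigma>. \<sigma> permutes {1..n'}})"
  define jj where "jj m = (m - 1) div n' + 1" for m :: nat
  define dd where "dd m = (m - 1) mod n' + 1" for m :: nat
  define I where "I S p = (\<lambda>m. c (p (jj m) (dd m))) ` S" for S :: "nat set" and p :: "nat \<Rightarrow> nat \<Rightarrow> nat"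
  define F where "F S s p = card {b\<in>B. \<forall>i\<in>I S p. \<not> basic_bit k s b i}" for S s p
  have Om: "sample_space n n' k = B \<times> P" unfolding sample_space_def B_def P_def M_def by simp
  have finB: "finite B" unfolding B_def by (simp add: finite_PiE)
  have finP: "finite P" unfolding P_def by (simp add: finite_PiE finite_permutations)
  have finOm: "finite (sample_space n n' k)" using Om finB finP by simp
  have st: "stacked n' k c S s (b, p) = (\<exists>i\<in>I S p. basic_bit k s b i)" for S s b p
    unfolding stacked_def share_bit_def Let_def I_def jj_def dd_def by auto
  have N: "card {\<omega> \<in> sample_space n n' k. \<not> stacked n' k c S s \<omega>} = (\<Sum>p\<in>P. F S s p)" for S s
  proof -
    have "card {\<omega> \<in> sample_space n n' k. \<not> stacked n' k c S s \<omega>}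
        = (\<Sum>p\<in>P. card {b\<in>B. \<not> stacked n' k c S s (b, p)})"
      unfolding Om by (rule card_split[OF finB finP])
    then show ?thesis unfolding F_def st by simp
  qed
  have Isub: "I S p \<subseteq> {1..k}" if "S \<subseteq> {1..n}" "p \<in> P" for S p
  proof
    fix i assume "i \<in> I S p"
    then obtain m where m: "m \<in> S" "i = c (p (jj m) (dd m))" unfolding I_def by auto
    have "jj m \<in> {1..M}" using jj_bound[of m n n'] m that n'1 unfolding jj_def M_def by auto
    then have "p (jj m) permutes {1..n'}" using that(2) unfolding P_def by auto
    moreover have "dd m \<in> {1..n'}" using dd_bound[OF n'1] unfolding dd_def by blast
    ultimately have "p (jj m) (dd m) \<in> {1..n'}" using permutes_in_image by metis
    then show "i \<in> {1..k}" using m assms(4) by blast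
  qed
  have cmp: "F S True p \<le> F S False p \<and> (I S p \<noteq> {1..k} \<longrightarrow> F S True p = F S False p)"
    if "S \<subseteq> {1..n}" "p \<in> P" for S p
  proof (cases "I S p = {1..k}")
    case True
    then show ?thesis unfolding F_def B_def using F_full_T[OF True] F_full_F[OF True] assms(1) by simp
  next
    case False
    note sub = Isub[OF that]
    show ?thesis
    proof (cases "k \<in> I S p")
      case True
      then obtain i0 where "i0 \<in> {1..k} - I S p" using False sub by blast
      then have "i0 \<noteq> k" using True by blast
      with \<open>i0 \<in> {1..k} - I S p\<close> have "i0 \<in> {1..k-1}" "i0 \<notin> I S p" by auto
      from F_flip[OF this, of True] show ?thesis unfolding F_def B_def by simp
    next
      case kn: False
      have "\<forall>i\<in>I S p. i < k"
      proof
        fix i assume "i \<in> I S p"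
        then have "i \<in> {1..k}" "i \<noteq> k" using sub kn by auto
        then show "i < k" by simp
      qed
      from F_low[OF this, of True False] show ?thesis unfolding F_def B_def by simp
    qed
  qed
  have part2: "contrast n n' k c S = 0" if "S \<subseteq> {1..n}" "card S < k" for S
  proof -
    have "I S p \<noteq> {1..k}" for p
    proof
      assume "I S p = {1..k}"
      then have "card (I S p) = k" by simp
      moreover have "card (I S p) \<le> card S" unfolding I_def by (rule card_image_le) (use that finite_subset in blast)
      ultimately show False using that by simp
    qed
    then have "(\<Sum>p\<in>P. F S True p) = (\<Sum>p\<in>P. F S False p)" using cmp[OF that(1)] by (intro sum.cong) auto
    then have "t_prob n n' k c S True = t_prob n n' k c S False" unfolding t_prob_def N by simp
    then show ?thesis unfolding contrast_def by simp
  qed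
  have part1: "contrast n n' k c S > 0" if S: "S \<subseteq> {1..n}" "card S = k" for S
  proof -
    have finS: "finite S" using S finite_subset by blast
    have "\<exists>g. bij_betw g S {1..k}"
      by (rule finite_same_card_bij[OF finS]) (use S(2) in simp_all)
    then obtain g where g: "bij_betw g S {1..k}" by (elim exE)
    have "\<forall>i\<in>{1..k}. \<exists>x. x \<in> {1..n'} \<and> c x = i"
    proof
      fix i assume "i \<in> {1..k}"
      then have "i \<in> c ` {1..n'}" using assms(4) by simp
      then show "\<exists>x. x \<in> {1..n'} \<and> c x = i" by blast
    qed
    from bchoice[OF this] obtain e where e: "\<forall>i\<in>{1..k}. e i \<in> {1..n'} \<and> c (e i) = i" by blast
    from exists_full[OF n'1 S(1) g e] obtain p0
      where p0P': "p0 \<in> PiE {1..num_groups n n'} (\<lambda>_. {\<sigma>. \<sigma> permutes {1..n'}})"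
        and p0g': "\<forall>m\<in>S. c (p0 ((m - 1) div n' + 1) ((m - 1) mod n' + 1)) = g m"
      by (elim bexE)
    have p0P: "p0 \<in> P" unfolding P_def M_def by (rule p0P')
    have p0g: "\<forall>m\<in>S. c (p0 (jj m) (dd m)) = g m" unfolding jj_def dd_def by (rule p0g')
    have "I S p0 = g ` S" unfolding I_def by (rule image_cong[OF refl]) (simp add: p0g)
    then have Ifull: "I S p0 = {1..k}" using g by (simp add: bij_betw_def)
    have lt: "(\<Sum>p\<in>P. F S True p) < (\<Sum>p\<in>P. F S False p)"
    proof (rule sum_strict_mono_ex1[OF finP])
      show "\<forall>p\<in>P. F S True p \<le> F S False p" using cmp[OF S(1)] by blast
      show "\<exists>p\<in>P. F S True p < F S False p"
      proof
        show "F S True p0 < F S False p0" unfolding F_def B_def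
          using F_full_T[OF Ifull] F_full_F[OF Ifull] assms(1) by simp
      qed (rule p0P)
    qed
    define N0 where "N0 = card {\<omega> \<in> sample_space n n' k. \<not> stacked n' k c S False \<omega>}"
    define N1 where "N1 = card {\<omega> \<in> sample_space n n' k. \<not> stacked n' k c S True \<omega>}"
    define T where "T = card (sample_space n n' k)"
    have "N1 < N0" unfolding N0_def N1_def N using lt .
    moreover have "N0 \<le> T" unfolding N0_def T_def by (rule card_mono[OF finOm]) auto
    ultimately have r: "real N1 < real N0" "0 < real T" by auto
    then have lt2: "real N1 / real T < real N0 / real T" by (simp add: divide_strict_right_mono)
    have ge0: "0 \<le> real N1 / real T" by simp
    have t0: "t_prob n n' k c S False = real N0 / real T" unfolding t_prob_def N0_def T_def by simp
    have t1: "t_prob n n' k c S True = real N1 / real T" unfolding t_prob_def N1_def T_def by simp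
    show ?thesis unfolding contrast_def t0 t1
      by (rule divide_pos_pos) (use lt2 ge0 in linarith)+
  qed
  show ?thesis using part1 part2 by auto
qed

end
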